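(* For every $T\in[0,\infty]$ there exists a joint strategy $\pi^*\in\Pi$ such that $$J_T(\pi^* )=\inf_{\pi\in\Pi}J_T(\pi).$$
   Context: Let $G=(V,E,A,\phi)$ be a finite connected undirected graph with node set $V$, edge set $E$, edge lengths $A:E\to\mathbb{R}_{>0}$ and node weights $\phi:V\to\mathbb{R}_{>0}$. Let $|G|$ be its metric graph (each edge $e$ realized as a closed interval of length $A(e)$ glued at its endpoints) with the shortest-path metric $d$. Fix $k\ge 1$ robots $r_1,\dots,r_k$ and equip $|G|^k$ with $d_k(p,p')=\max_{i}d(p_i,p'_i)$. The set of feasible joint strategies is $\Pi=\{\pi\in C([0,\infty),|G|^k):\ d_k(\pi(t),\pi(t'))\le |t-t'|\ \forall t,t'\ge0\}$, and we write $\pi=(\pi_{r_1},\dots,\pi_{r_k})$. For $v\in V$ and $t\ge0$ let $\tau^\pi(v,t)=\sup\{t'\le t:\ \pi_r(t')=v\text{ for some }r\}$ if this set is nonempty and $\tau^\pi(v,t)=0$ otherwise; the latency is $L^\pi_v(t)=t-\tau^\pi(v,t)$ and the instantaneous worst weighted latency is $M^\pi(t)=\max_{v\in V}\phi(v)L^\pi_v(t)$. For $T\in[0,\infty)$ set $J_T(\pi)=\sup_{t\ge T}M^\pi(t)\in[0,\infty]$, and $J_\infty(\pi)=\limsup_{t\to\infty}M^\pi(t)$. *)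

theory Defs
  imports "HOL-Analysis.Analysis"
begin

definition is_walk :: "'v set set \<Rightarrow> 'v \<Rightarrow> 'v \<Rightarrow> 'v list \<Rightarrow> bool" where
  "is_walk E u w xs \<longleftrightarrow> xs \<noteq> [] \<and> hd xs = u \<and> last xs = w \<and>
     (\<forall>i. Suc i < length xs \<longrightarrow> {xs ! i, xs ! Suc i} \<in> E)"

definition walk_len :: "('v set \<Rightarrow> real) \<Rightarrow> 'v list \<Rightarrow> real" where
  "walk_len A xs = (\<Sum>i<length xs - 1. A {xs ! i, xs ! Suc i})"

definition node_dist :: "'v set set \<Rightarrow> ('v set \<Rightarrow> real) \<Rightarrow> 'v \<Rightarrow> 'v \<Rightarrow> real" where
  "node_dist E A u w = Inf {walk_len A xs | xs. is_walk E u w xs}"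

definition graph_ok :: "'v set \<Rightarrow> 'v set set \<Rightarrow> ('v set \<Rightarrow> real) \<Rightarrow> ('v \<Rightarrow> real) \<Rightarrow> bool" where
  "graph_ok V E A phi \<longleftrightarrow> finite V \<and> V \<noteq> {} \<and>
     (\<forall>e\<in>E. e \<subseteq> V \<and> card e = 2 \<and> A e > 0) \<and>
     (\<forall>v\<in>V. phi v > 0) \<and>
     (\<forall>u\<in>V. \<forall>w\<in>V. \<exists>xs. is_walk E u w xs)"

text \<open>\<open>Vtx v\<close> is the node v; \<open>Mid u v s\<close> is the interior point of edge {u,v} at distance s
  from u (0 < s < A{u,v}); \<open>Mid u v s\<close> and \<open>Mid v u (A{u,v} - s)\<close> denote the same point
  (distance 0 between them).\<close>
datatype 'v mpoint = Vtx 'v | Mid 'v 'v real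

definition valid_pt :: "'v set \<Rightarrow> 'v set set \<Rightarrow> ('v set \<Rightarrow> real) \<Rightarrow> 'v mpoint \<Rightarrow> bool" where
  "valid_pt V E A p = (case p of Vtx v \<Rightarrow> v \<in> V
     | Mid u v s \<Rightarrow> {u, v} \<in> E \<and> 0 < s \<and> s < A {u, v})"

fun anchors :: "('v set \<Rightarrow> real) \<Rightarrow> 'v mpoint \<Rightarrow> ('v \<times> real) set" where
  "anchors A (Vtx v) = {(v, 0)}"
| "anchors A (Mid u v s) = {(u, s), (v, A {u, v} - s)}"

text \<open>Direct travel inside a common edge.\<close>
fun direct :: "('v set \<Rightarrow> real) \<Rightarrow> 'v mpoint \<Rightarrow> 'v mpoint \<Rightarrow> real set" where
  "direct A (Mid u v s) (Mid u' v' s') =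
     (if u = u' \<and> v = v' then {\<bar>s - s'\<bar>}
      else if u = v' \<and> v = u' then {\<bar>s - (A {u, v} - s')\<bar>} else {})"
| "direct A _ _ = {}"

definition mdist :: "'v set set \<Rightarrow> ('v set \<Rightarrow> real) \<Rightarrow> 'v mpoint \<Rightarrow> 'v mpoint \<Rightarrow> real" where
  "mdist E A p q = Min ((\<lambda>((x, a), (y, b)). a + node_dist E A x y + b) ` (anchors A p \<times> anchors A q)
                        \<union> direct A p q)"

definition strategies :: "'v set \<Rightarrow> 'v set set \<Rightarrow> ('v set \<Rightarrow> real) \<Rightarrow> nat \<Rightarrow> (real \<Rightarrow> nat \<Rightarrow> 'v mpoint) set" where
  "strategies V E A k = {\<pi>. (\<forall>t\<ge>0. \<forall>i<k. valid_pt V E A (\<pi> t i)) \<and>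
     (\<forall>t\<ge>0. \<forall>t'\<ge>0. Max ((\<lambda>i. mdist E A (\<pi> t i) (\<pi> t' i)) ` {..<k}) \<le> \<bar>t - t'\<bar>)}"

definition last_visit :: "nat \<Rightarrow> (real \<Rightarrow> nat \<Rightarrow> 'v mpoint) \<Rightarrow> 'v \<Rightarrow> real \<Rightarrow> real" where
  "last_visit k \<pi> v t =
     (let S = {t'. 0 \<le> t' \<and> t' \<le> t \<and> (\<exists>i<k. \<pi> t' i = Vtx v)} in if S = {} then 0 else Sup S)"

definition latency :: "nat \<Rightarrow> (real \<Rightarrow> nat \<Rightarrow> 'v mpoint) \<Rightarrow> 'v \<Rightarrow> real \<Rightarrow> real" where
  "latency k \<pi> v t = t - last_visit k \<pi> v t"

definition worst_lat :: "'v set \<Rightarrow> ('v \<Rightarrow> real) \<Rightarrow> nat \<Rightarrow> (real \<Rightarrow> nat \<Rightarrow> 'v mpoint) \<Rightarrow> real \<Rightarrow> real" where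
  "worst_lat V phi k \<pi> t = Max ((\<lambda>v. phi v * latency k \<pi> v t) ` V)"

definition cost :: "'v set \<Rightarrow> ('v \<Rightarrow> real) \<Rightarrow> nat \<Rightarrow> ereal \<Rightarrow> (real \<Rightarrow> nat \<Rightarrow> 'v mpoint) \<Rightarrow> ereal" where
  "cost V phi k T \<pi> =
     (if T = \<infinity> then Limsup at_top (\<lambda>t. ereal (worst_lat V phi k \<pi> t))
      else (SUP t\<in>{real_of_ereal T..}. ereal (worst_lat V phi k \<pi> t)))"

end

theory Submission
  imports Defs
begin

fun rwalk :: "'v set set \<Rightarrow> 'v list \<Rightarrow> bool" where
  "rwalk E [] = False"
| "rwalk E [a] = True"
| "rwalk E (a#b#r) = ({a,b} \<in> E \<and> rwalk E (b#r))"

fun rlen :: "('v set \<Rightarrow> real) \<Rightarrow> 'v list \<Rightarrow> real" where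
  "rlen A [] = 0" | "rlen A [a] = 0" | "rlen A (a#b#r) = A {a,b} + rlen A (b#r)"

lemma walk_len_Cons2: "walk_len A (a#b#r) = A {a,b} + walk_len A (b#r)"
  unfolding walk_len_def by (simp add: sum.lessThan_Suc_shift del: sum.lessThan_Suc)

lemma walk_len_rlen: "walk_len A xs = rlen A xs"
  by (induction A xs rule: rlen.induct) (simp_all add: walk_len_Cons2, simp_all add: walk_len_def)

lemma all_Suc_split: "(\<forall>i. P i) \<longleftrightarrow> P 0 \<and> (\<forall>i. P (Suc i))"
  by (metis not0_implies_Suc)

lemma is_walk_iff: "is_walk E u w xs \<longleftrightarrow> rwalk E xs \<and> hd xs = u \<and> last xs = w"
proof (induction E xs arbitrary: u rule: rwalk.induct)
  case (1 E) then show ?case by (simp add: is_walk_def)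
next
  case (2 E a) then show ?case by (simp add: is_walk_def)
next
  case (3 E a b r)
  have "(\<forall>i. Suc i < length (a#b#r) \<longrightarrow> {(a#b#r) ! i, (a#b#r) ! Suc i} \<in> E) \<longleftrightarrow>
        {a,b} \<in> E \<and> (\<forall>i. Suc i < length (b#r) \<longrightarrow> {(b#r) ! i, (b#r) ! Suc i} \<in> E)"
    by (subst all_Suc_split) simp
  then show ?case using 3[of b] by (auto simp: is_walk_def)
qed

lemma nd_alt: "node_dist E A u w = Inf {rlen A xs | xs. rwalk E xs \<and> hd xs = u \<and> last xs = w}"
  unfolding node_dist_def is_walk_iff walk_len_rlen ..

lemma rwalk_append: "rwalk E xs \<Longrightarrow> rwalk E ys \<Longrightarrow> last xs = hd ys \<Longrightarrow>
   rwalk E (xs @ tl ys) \<and> rlen A (xs @ tl ys) = rlen A xs + rlen A ys \<and> hd (xs @ tl ys) = hd xs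
   \<and> last (xs @ tl ys) = last ys"
proof (induction E xs rule: rwalk.induct)
  case (2 E a)
  then show ?case by (cases ys) auto
next
  case (3 E a b r)
  then show ?case by (cases ys) auto
qed auto

lemma rwalk_rev: "rwalk E xs \<Longrightarrow> rwalk E (rev xs) \<and> rlen A (rev xs) = rlen A xs"
proof (induction E xs rule: rwalk.induct)
  case (3 E a b r)
  have w: "rwalk E [b,a]" using 3 by (simp add: insert_commute)
  have "rev (a#b#r) = rev (b#r) @ tl [b,a]" by simp
  moreover have "last (rev (b#r)) = hd [b,a]" by simp
  ultimately show ?case using rwalk_append[OF _ w, of "rev (b#r)" A] 3
    by (simp add: insert_commute)
qed auto

lemma nd_sym: "node_dist E A u w = node_dist E A w u"
proof -
  have "{rlen A xs | xs. rwalk E xs \<and> hd xs = u \<and> last xs = w} \<subseteq>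
        {rlen A xs | xs. rwalk E xs \<and> hd xs = w \<and> last xs = u}" for u w
  proof
    fix x assume "x \<in> {rlen A xs | xs. rwalk E xs \<and> hd xs = u \<and> last xs = w}"
    then obtain xs where "rwalk E xs" "hd xs = u" "last xs = w" "x = rlen A xs" by auto
    moreover have "xs \<noteq> []" using \<open>rwalk E xs\<close> by auto
    ultimately show "x \<in> {rlen A xs | xs. rwalk E xs \<and> hd xs = w \<and> last xs = u}"
      using rwalk_rev[of E xs A] by (auto simp: hd_rev last_rev intro!: exI[of _ "rev xs"])
  qed
  then show ?thesis unfolding nd_alt by (metis (no_types, lifting) subset_antisym)
qed

locale pg =
  fixes V :: "'v set" and E :: "'v set set" and A :: "'v set \<Rightarrow> real" and phi :: "'v \<Rightarrow> real"
  assumes G: "graph_ok V E A phi"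
begin

lemma list012: "xs = [] \<or> (\<exists>a. xs = [a]) \<or> (\<exists>a b r. xs = a#b#r)"
  by (metis list.exhaust)

abbreviation "nd \<equiv> node_dist E A"

lemma finV: "finite V" and neV: "V \<noteq> {}" and phipos: "v \<in> V \<Longrightarrow> phi v > 0"
  using G by (auto simp: graph_ok_def)

lemma edge: assumes "{a,b} \<in> E" shows "a \<in> V" "b \<in> V" "a \<noteq> b" "A {a,b} > 0"
proof -
  have "{a,b} \<subseteq> V" "card {a,b} = 2" "A {a,b} > 0" using G assms by (auto simp: graph_ok_def)
  then show "a \<in> V" "b \<in> V" "a \<noteq> b" "A {a,b} > 0" by (auto split: if_splits)
qed

lemma conn: "u \<in> V \<Longrightarrow> w \<in> V \<Longrightarrow> \<exists>xs. rwalk E xs \<and> hd xs = u \<and> last xs = w"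
  using G by (auto simp: graph_ok_def is_walk_iff)

lemma finE: "finite E"
proof -
  have "E \<subseteq> Pow V" using G by (auto simp: graph_ok_def)
  then show ?thesis using finV by (meson finite_Pow_iff finite_subset)
qed

definition "dl = (if E = {} then 1 else Min (A ` E))"

lemma dl_pos: "dl > 0"
  using finE G by (auto simp: dl_def graph_ok_def)

lemma dl_le: "e \<in> E \<Longrightarrow> dl \<le> A e"
  using finE by (auto simp: dl_def)

lemma rlen_lb: "rwalk E xs \<Longrightarrow> dl * (real (length xs) - 1) \<le> rlen A xs"
proof (induction xs rule: induct_list012)
  case (3 a b r)
  then have "dl \<le> A {a,b}" by (auto intro: dl_le)
  with 3 show ?case by (auto simp: algebra_simps)
qed auto

lemma rlen_nonneg: "rwalk E xs \<Longrightarrow> 0 \<le> rlen A xs"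
  using rlen_lb[of xs] dl_pos by (cases xs) (auto intro: order_trans[rotated])

lemma rwalk_set: "rwalk E xs \<Longrightarrow> hd xs \<in> V \<Longrightarrow> set xs \<subseteq> V"
proof (induction xs rule: induct_list012)
  case (3 a b r) then show ?case using edge[of a b] by auto
qed auto

lemma nd_set_ne: "u \<in> V \<Longrightarrow> w \<in> V \<Longrightarrow> {rlen A xs | xs. rwalk E xs \<and> hd xs = u \<and> last xs = w} \<noteq> {}"
  using conn by blast

lemma nd_set_bdd: "bdd_below {rlen A xs | xs. rwalk E xs \<and> hd xs = u \<and> last xs = w}"
  by (rule bdd_belowI[of _ 0]) (auto intro: rlen_nonneg)

lemma nd_le: "rwalk E xs \<Longrightarrow> nd (hd xs) (last xs) \<le> rlen A xs"
  unfolding nd_alt by (rule cInf_lower[OF _ nd_set_bdd]) auto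

lemma nd_attained: assumes "u \<in> V" "w \<in> V"
  shows "\<exists>xs. rwalk E xs \<and> hd xs = u \<and> last xs = w \<and> rlen A xs = nd u w"
proof -
  let ?S = "{rlen A xs | xs. rwalk E xs \<and> hd xs = u \<and> last xs = w}"
  obtain xs0 where x0: "rwalk E xs0" "hd xs0 = u" "last xs0 = w" using conn assms by blast
  define B where "B = rlen A xs0"
  define N where "N = nat (ceiling (B / dl)) + 1"
  let ?SB = "{rlen A xs | xs. rwalk E xs \<and> hd xs = u \<and> last xs = w \<and> rlen A xs \<le> B}"
  have sub: "?SB \<subseteq> rlen A ` {xs. set xs \<subseteq> V \<and> length xs \<le> N}"
  proof
    fix x assume "x \<in> ?SB"
    then obtain xs where xs: "rwalk E xs" "hd xs = u" "last xs = w" "rlen A xs \<le> B" "x = rlen A xs" by auto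
    have "set xs \<subseteq> V" using rwalk_set[OF xs(1)] xs(2) assms by auto
    moreover have "length xs \<le> N"
    proof -
      have "dl * (real (length xs) - 1) \<le> B" using rlen_lb[OF xs(1)] xs(4) by linarith
      then have "real (length xs) - 1 \<le> B / dl" using dl_pos by (simp add: field_simps mult.commute)
      also have "\<dots> \<le> real (nat (ceiling (B / dl)))" by linarith
      finally show ?thesis unfolding N_def by linarith
    qed
    ultimately show "x \<in> rlen A ` {xs. set xs \<subseteq> V \<and> length xs \<le> N}" using xs by auto
  qed
  have fin: "finite ?SB" by (rule finite_subset[OF sub]) (auto intro: finite_lists_length_le finV)
  have ne: "B \<in> ?SB" using x0 B_def by auto
  define m where "m = Min ?SB"
  have mS: "m \<in> ?SB" unfolding m_def using fin ne by (intro Min_in) auto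
  have mle: "m \<le> x" if "x \<in> ?S" for x
  proof (cases "x \<le> B")
    case True then show ?thesis using that fin unfolding m_def by (auto intro: Min_le)
  next
    case False then show ?thesis using fin ne unfolding m_def by (meson Min_le not_le order.strict_trans2 less_imp_le)
  qed
  have "nd u w = m" unfolding nd_alt by (rule cInf_eq_minimum) (use mS mle in auto)
  then show ?thesis using mS by auto
qed

lemma nd_refl: "nd v v = 0"
proof -
  have "nd v v \<le> 0" using nd_le[of "[v]"] by simp
  moreover have "v \<in> V \<Longrightarrow> 0 \<le> nd v v" unfolding nd_alt
    by (rule cInf_greatest[OF nd_set_ne]) (auto intro: rlen_nonneg)
  moreover have "v \<notin> V \<Longrightarrow> nd v v = 0"
  proof -
    assume "v \<notin> V"
    have "{rlen A xs | xs. rwalk E xs \<and> hd xs = v \<and> last xs = v} = {0}"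
    proof (rule set_eqI, rule iffI)
      fix x assume "x \<in> {rlen A xs | xs. rwalk E xs \<and> hd xs = v \<and> last xs = v}"
      then obtain xs where "rwalk E xs" "hd xs = v" "x = rlen A xs" by auto
      then show "x \<in> {0}" using \<open>v \<notin> V\<close> list012[of xs] by (auto dest: edge)
    next
      fix x assume "x \<in> {0::real}" then show "x \<in> {rlen A xs | xs. rwalk E xs \<and> hd xs = v \<and> last xs = v}"
        by (auto intro!: exI[of _ "[v]"])
    qed
    then show ?thesis unfolding nd_alt by simp
  qed
  ultimately show ?thesis by force
qed

lemma nd_nonneg: "u \<in> V \<Longrightarrow> w \<in> V \<Longrightarrow> 0 \<le> nd u w"
  using nd_attained rlen_nonneg by metis

lemma nd_tri: assumes "u \<in> V" "v \<in> V" "w \<in> V" shows "nd u w \<le> nd u v + nd v w"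
proof -
  obtain xs where xs: "rwalk E xs" "hd xs = u" "last xs = v" "rlen A xs = nd u v" using nd_attained assms by blast
  obtain ys where ys: "rwalk E ys" "hd ys = v" "last ys = w" "rlen A ys = nd v w" using nd_attained assms by blast
  have "rwalk E (xs @ tl ys)" "rlen A (xs @ tl ys) = rlen A xs + rlen A ys"
       "hd (xs @ tl ys) = u" "last (xs @ tl ys) = w"
    using rwalk_append[OF xs(1) ys(1), of A] xs ys by auto
  then show ?thesis using nd_le[of "xs @ tl ys"] xs ys by auto
qed

lemma nd_pos: assumes "u \<in> V" "w \<in> V" "u \<noteq> w" shows "0 < nd u w"
proof -
  obtain xs where xs: "rwalk E xs" "hd xs = u" "last xs = w" "rlen A xs = nd u w" using nd_attained assms by blast
  have "real (length xs) - 1 \<ge> 1" using xs assms list012[of xs] by auto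
  then have "dl \<le> dl * (real (length xs) - 1)" using dl_pos by simp
  then show ?thesis using rlen_lb[OF xs(1)] xs dl_pos by linarith
qed

lemma nd_edge: "{a,b} \<in> E \<Longrightarrow> nd a b \<le> A {a,b}"
  using nd_le[of "[a,b]"] by simp

end

fun pos :: "('v set \<Rightarrow> real) \<Rightarrow> 'v list \<Rightarrow> real \<Rightarrow> 'v mpoint" where
  "pos A [] x = Vtx undefined"
| "pos A [a] x = Vtx a"
| "pos A (a#b#r) x = (if x \<le> 0 then Vtx a else if x < A {a,b} then Mid a b x
     else pos A (b#r) (x - A {a,b}))"

lemma direct_sym: "direct A p q = direct A q p"
proof (cases p)
  case (Mid u v s)
  show ?thesis
  proof (cases q)
    case (Mid u' v' s')
    have h: "\<bar>s - (X - s')\<bar> = \<bar>s' - (X - s)\<bar>" for X :: real by arith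
    have c: "{v,u} = {u,v}" by blast
    consider "u = u' \<and> v = v'" | "\<not>(u = u' \<and> v = v')" "u = v' \<and> v = u'" | "\<not>(u = u' \<and> v = v')" "\<not>(u = v' \<and> v = u')" by blast
    then show ?thesis
    proof cases
      case 1 then show ?thesis using Mid \<open>p = _\<close> by (auto simp: abs_minus_commute)
    next
      case 2
      then have "\<not>(u' = u \<and> v' = v)" "u' = v \<and> v' = u" by auto
      have e1: "direct A p q = {\<bar>s - (A {u,v} - s')\<bar>}" using 2 Mid \<open>p = _\<close> by simp
      have e2: "direct A q p = {\<bar>s' - (A {u',v'} - s)\<bar>}" using 2 Mid \<open>p = _\<close> \<open>\<not>(u' = u \<and> v' = v)\<close> by simp
      have "{u',v'} = {u,v}" using 2 by blast
      then show ?thesis using e1 e2 h[of "A {u,v}"] by simp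
    next
      case 3
      then have "\<not>(u' = u \<and> v' = v)" "\<not>(u' = v \<and> v' = u)" by auto
      then show ?thesis using 3 Mid \<open>p = _\<close> by (simp only: direct.simps if_False if_True)
    qed
  qed (auto simp: Mid)
qed auto

lemma anchors_fin: "finite (anchors A p)"
  by (cases p) auto

lemma direct_fin: "finite (direct A p q)"
  by (cases p; cases q) auto

lemma mdist_vtx: "mdist E A (Vtx a) (Vtx b) = node_dist E A a b"
  by (simp add: mdist_def)

lemma mdist_le_anchor: "(x,a) \<in> anchors A p \<Longrightarrow> (y,b) \<in> anchors A q \<Longrightarrow> mdist E A p q \<le> a + node_dist E A x y + b"
  unfolding mdist_def
  by (rule Min_le) (auto simp: anchors_fin direct_fin intro!: rev_image_eqI[of "((x,a),(y,b))"])

lemma mdist_le_direct: "d \<in> direct A p q \<Longrightarrow> mdist E A p q \<le> d"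
  unfolding mdist_def by (rule Min_le) (auto simp: anchors_fin direct_fin)

lemma mdist_sym: "mdist E A p q = mdist E A q p"
proof -
  have "(\<lambda>((x, a), (y, b)). a + node_dist E A x y + b) ` (anchors A p \<times> anchors A q) \<subseteq>
        (\<lambda>((x, a), (y, b)). a + node_dist E A x y + b) ` (anchors A q \<times> anchors A p)" for p q
  proof
    fix z assume "z \<in> (\<lambda>((x, a), (y, b)). a + node_dist E A x y + b) ` (anchors A p \<times> anchors A q)"
    then obtain x a y b where "(x,a) \<in> anchors A p" "(y,b) \<in> anchors A q" "z = a + node_dist E A x y + b" by auto
    then show "z \<in> (\<lambda>((x, a), (y, b)). a + node_dist E A x y + b) ` (anchors A q \<times> anchors A p)"
      by (intro rev_image_eqI[of "((y,b),(x,a))"]) (auto simp: nd_sym)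
  qed
  then have "(\<lambda>((x, a), (y, b)). a + node_dist E A x y + b) ` (anchors A p \<times> anchors A q) =
        (\<lambda>((x, a), (y, b)). a + node_dist E A x y + b) ` (anchors A q \<times> anchors A p)"
    by (meson subset_antisym)
  then show ?thesis unfolding mdist_def using direct_sym by metis
qed

context pg begin

lemma pos_valid: "rwalk E W \<Longrightarrow> hd W \<in> V \<Longrightarrow> valid_pt V E A (pos A W x)"
proof (induction W arbitrary: x rule: induct_list012)
  case (3 a b r)
  then show ?case using edge[of a b] by (auto simp: valid_pt_def)
qed (auto simp: valid_pt_def)

lemma pos_fwd: "rwalk E W \<Longrightarrow> hd W \<in> V \<Longrightarrow> 0 \<le> x \<Longrightarrow>
   \<exists>(w,\<alpha>)\<in>anchors A (pos A W x). w \<in> V \<and> \<alpha> + nd w (last W) \<le> max 0 (rlen A W - x)"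
proof (induction W arbitrary: x rule: induct_list012)
  case (2 a) then show ?case by (auto simp: nd_refl)
next
  case (3 a b r)
  have ab: "a \<in> V" "b \<in> V" "A {a,b} > 0" using 3 edge[of a b] by auto
  show ?case
  proof (cases "x \<le> 0")
    case True
    then have "x = 0" using 3 by simp
    then show ?thesis using nd_le[of "a#b#r"] 3 ab by auto
  next
    case False
    show ?thesis
    proof (cases "x < A {a,b}")
      case True
      then have "A {a,b} - x + nd b (last (b#r)) \<le> max 0 (rlen A (a#b#r) - x)"
        using nd_le[of "b#r"] 3 by auto
      then show ?thesis using False True ab by auto
    next
      case True': False
      have "\<exists>(w,\<alpha>)\<in>anchors A (pos A (b#r) (x - A{a,b})). w \<in> V \<and> \<alpha> + nd w (last (b#r)) \<le> max 0 (rlen A (b#r) - (x - A{a,b}))"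
        using 3 True' ab by auto
      then show ?thesis using False True' by (auto simp: algebra_simps)
    qed
  qed
qed auto

lemma pos_bwd: "rwalk E W \<Longrightarrow> hd W \<in> V \<Longrightarrow> 0 \<le> x \<Longrightarrow>
   \<exists>(w,\<beta>)\<in>anchors A (pos A W x). w \<in> V \<and> nd (hd W) w + \<beta> \<le> x"
proof (induction W arbitrary: x rule: induct_list012)
  case (2 a) then show ?case by (auto simp: nd_refl)
next
  case (3 a b r)
  have ab: "a \<in> V" "b \<in> V" "A {a,b} > 0" using 3 edge[of a b] by auto
  show ?case
  proof (cases "x \<le> 0")
    case True
    then have "pos A (a#b#r) x = Vtx a" "x = 0" using 3 by auto
    then show ?thesis using ab by (intro bexI[of _ "(a,0)"]) (auto simp: nd_refl)
  next
    case False
    show ?thesis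
    proof (cases "x < A {a,b}")
      case True
      then have "pos A (a#b#r) x = Mid a b x" using False by auto
      then show ?thesis using ab by (intro bexI[of _ "(a,x)"]) (auto simp: nd_refl)
    next
      case True': False
      have "\<exists>(w,\<beta>)\<in>anchors A (pos A (b#r) (x - A{a,b})). w \<in> V \<and> nd (hd (b#r)) w + \<beta> \<le> x - A{a,b}"
        using 3 True' ab by simp
      then obtain w \<beta> where wb: "(w,\<beta>) \<in> anchors A (pos A (b#r) (x - A{a,b}))" "w \<in> V" "nd b w + \<beta> \<le> x - A{a,b}"
        by auto
      have "nd a w \<le> nd a b + nd b w" using nd_tri ab wb by blast
      moreover have "nd a b \<le> A{a,b}" using nd_edge 3 by simp
      moreover have "pos A (a#b#r) x = pos A (b#r) (x - A{a,b})" using False True' by simp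
      ultimately show ?thesis using wb by (intro bexI[of _ "(w,\<beta>)"]) auto
    qed
  qed
qed auto

lemma pos_arc: "rwalk E W \<Longrightarrow> hd W \<in> V \<Longrightarrow> 0 \<le> x \<Longrightarrow> x \<le> y \<Longrightarrow>
   mdist E A (pos A W x) (pos A W y) \<le> y - x"
proof (induction W arbitrary: x y rule: induct_list012)
  case (2 a) then show ?case by (auto simp: mdist_vtx nd_refl)
next
  case (3 a b r)
  have ab: "a \<in> V" "b \<in> V" "A {a,b} > 0" using 3 edge[of a b] by auto
  show ?case
  proof (cases "x \<le> 0")
    case True
    then have x0: "x = 0" using 3 by simp
    obtain w \<beta> where wb: "(w,\<beta>) \<in> anchors A (pos A (a#b#r) y)" "w \<in> V" "nd a w + \<beta> \<le> y"
      using pos_bwd[of "a#b#r" y] 3 by fastforce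
    have "mdist E A (Vtx a) (pos A (a#b#r) y) \<le> 0 + nd a w + \<beta>"
      by (rule mdist_le_anchor[OF _ wb(1)]) simp
    then show ?thesis using x0 wb by simp
  next
    case False
    show ?thesis
    proof (cases "x < A {a,b}")
      case True
      show ?thesis
      proof (cases "y < A {a,b}")
        case True2: True
        have "mdist E A (Mid a b x) (Mid a b y) \<le> \<bar>x - y\<bar>" by (rule mdist_le_direct) simp
        then show ?thesis using False True True2 3 by auto
      next
        case False2: False
        obtain w \<beta> where wb: "(w,\<beta>) \<in> anchors A (pos A (b#r) (y - A{a,b}))" "w \<in> V" "nd b w + \<beta> \<le> y - A{a,b}"
          using pos_bwd[of "b#r" "y - A{a,b}"] 3 ab False2 by fastforce
        have "mdist E A (Mid a b x) (pos A (b#r) (y - A{a,b})) \<le> (A{a,b} - x) + nd b w + \<beta>"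
          by (rule mdist_le_anchor[OF _ wb(1)]) simp
        then show ?thesis using False True False2 wb 3 by auto
      qed
    next
      case True': False
      then have "mdist E A (pos A (b#r) (x - A{a,b})) (pos A (b#r) (y - A{a,b})) \<le> (y - A{a,b}) - (x - A{a,b})"
        using "3.IH"(2)[of "x - A{a,b}" "y - A{a,b}"] "3.prems" ab True' by simp
      then show ?thesis using False True' "3.prems" by simp
    qed
  qed
qed auto

end

lemma pos_0: "W \<noteq> [] \<Longrightarrow> pos A W 0 = Vtx (hd W)"
  by (cases W; cases "tl W") auto

context pg begin

lemma realize:
  assumes R: "R \<subseteq> {t. 0 \<le> t} \<times> V"
    and P: "\<And>t a t' b. (t,a) \<in> R \<Longrightarrow> (t',b) \<in> R \<Longrightarrow> nd a b \<le> \<bar>t - t'\<bar>"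
    and C: "\<And>v. v \<in> V \<Longrightarrow> closed {t. (t,v) \<in> R}"
  shows "\<exists>f. (\<forall>t\<ge>0. valid_pt V E A (f t)) \<and> (\<forall>t v. (t,v) \<in> R \<longrightarrow> f t = Vtx v) \<and>
             (\<forall>t\<ge>0. \<forall>t'\<ge>0. mdist E A (f t) (f t') \<le> \<bar>t - t'\<bar>)"
proof -
  define D where "D = fst ` R"
  have Deq: "D = (\<Union>v\<in>V. {t. (t,v) \<in> R})" using R unfolding D_def by force
  have clD: "closed D" unfolding Deq using finV C by (intro closed_UN) auto
  have D0: "d \<in> D \<Longrightarrow> 0 \<le> d" for d using R unfolding D_def by auto
  have uniq: "a = b" if "(t,a) \<in> R" "(t,b) \<in> R" for t a b
  proof (rule ccontr)
    assume "a \<noteq> b"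
    moreover have "a \<in> V" "b \<in> V" using that R by auto
    ultimately have "0 < nd a b" by (rule nd_pos[rotated 2])
    moreover have "nd a b \<le> 0" using P[OF that] by simp
    ultimately show False by simp
  qed
  define vx where "vx t = (THE v. (t,v) \<in> R)" for t
  have vx: "(t, vx t) \<in> R" "vx t \<in> V" if tD: "t \<in> D" for t
  proof -
    obtain v where v: "(t,v) \<in> R" using tD unfolding D_def by force
    have "vx t = v" unfolding vx_def using v uniq by blast
    then show "(t, vx t) \<in> R" "vx t \<in> V" using v R by auto
  qed
  define prv where "prv t = Sup (D \<inter> {..t})" for t
  define nxt where "nxt t = Inf (D \<inter> {t..})" for t
  have prv: "prv t \<in> D" "prv t \<le> t" "\<And>d. d \<in> D \<Longrightarrow> d \<le> t \<Longrightarrow> d \<le> prv t" if "D \<inter> {..t} \<noteq> {}" for t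
  proof -
    have bd: "bdd_above (D \<inter> {..t})" by (rule bdd_aboveI[of _ t]) auto
    have "prv t \<in> D \<inter> {..t}" unfolding prv_def
      by (rule closed_contains_Sup[OF that bd]) (intro closed_Int clD closed_atMost)
    then show "prv t \<in> D" "prv t \<le> t" by auto
    show "d \<le> prv t" if "d \<in> D" "d \<le> t" for d unfolding prv_def using that bd by (intro cSup_upper) auto
  qed
  have nxt: "nxt t \<in> D" "t \<le> nxt t" "\<And>d. d \<in> D \<Longrightarrow> t \<le> d \<Longrightarrow> nxt t \<le> d" if "D \<inter> {t..} \<noteq> {}" for t
  proof -
    have bd: "bdd_below (D \<inter> {t..})" by (rule bdd_belowI[of _ t]) auto
    have "nxt t \<in> D \<inter> {t..}" unfolding nxt_def
      by (rule closed_contains_Inf[OF that bd]) (intro closed_Int clD closed_atLeast)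
    then show "nxt t \<in> D" "t \<le> nxt t" by auto
    show "nxt t \<le> d" if "d \<in> D" "t \<le> d" for d unfolding nxt_def using that bd by (intro cInf_lower) auto
  qed
  define W where "W a b = (SOME xs. rwalk E xs \<and> hd xs = a \<and> last xs = b \<and> rlen A xs = nd a b)" for a b
  have W: "rwalk E (W a b)" "hd (W a b) = a" "last (W a b) = b" "rlen A (W a b) = nd a b"
    if "a \<in> V" "b \<in> V" for a b
    using someI_ex[OF nd_attained[OF that]] unfolding W_def by auto
  obtain v0 where v0: "v0 \<in> V" using neV by auto
  define f where "f t = (if D \<inter> {..t} = {} then (if D \<inter> {t..} = {} then Vtx v0 else Vtx (vx (nxt t)))
       else if D \<inter> {t..} = {} then Vtx (vx (prv t))
       else pos A (W (vx (prv t)) (vx (nxt t))) (t - prv t))" for t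
  have valid: "valid_pt V E A (f t)" for t
  proof -
    consider "D \<inter> {..t} = {}" "D \<inter> {t..} = {}" | "D \<inter> {..t} = {}" "D \<inter> {t..} \<noteq> {}"
      | "D \<inter> {..t} \<noteq> {}" "D \<inter> {t..} = {}" | "D \<inter> {..t} \<noteq> {}" "D \<inter> {t..} \<noteq> {}" by blast
    then show ?thesis
    proof cases
      case 1 then show ?thesis using v0 by (simp add: f_def valid_pt_def)
    next
      case 2 then show ?thesis using vx(2)[OF nxt(1)[OF 2(2)]] by (simp add: f_def valid_pt_def)
    next
      case 3 then show ?thesis using vx(2)[OF prv(1)[OF 3(1)]] by (simp add: f_def valid_pt_def)
    next
      case 4
      have a: "vx (prv t) \<in> V" "vx (nxt t) \<in> V" using vx(2) prv(1)[OF 4(1)] nxt(1)[OF 4(2)] by auto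
      show ?thesis using 4 pos_valid[OF W(1)[OF a] ] W(2)[OF a] a by (simp add: f_def)
    qed
  qed
  have visit: "f t = Vtx v" if "(t,v) \<in> R" for t v
  proof -
    have tD: "t \<in> D" using that unfolding D_def by force
    then have ne: "D \<inter> {..t} \<noteq> {}" "D \<inter> {t..} \<noteq> {}" by auto
    have "prv t = t" using prv[OF ne(1)] tD by (meson order_antisym order_refl)
    moreover have "nxt t = t" using nxt[OF ne(2)] tD by (meson order_antisym order_refl)
    moreover have "vx t = v" using vx(1)[OF tD] that uniq by blast
    ultimately have "f t = pos A (W v v) 0" using ne by (simp add: f_def)
    also have "\<dots> = Vtx v" using W[of v v] vx(2)[OF tD] \<open>vx t = v\<close>
      by (subst pos_0) auto
    finally show ?thesis .
  qed
  have fwd: "\<exists>(w,\<alpha>)\<in>anchors A (f t). w \<in> V \<and> \<alpha> + nd w (vx (nxt t)) \<le> nxt t - t"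
    if ne: "D \<inter> {t..} \<noteq> {}" for t
  proof (cases "D \<inter> {..t} = {}")
    case True
    then have "f t = Vtx (vx (nxt t))" using ne by (simp add: f_def)
    then show ?thesis using vx(2)[OF nxt(1)[OF ne]] nxt(2)[OF ne]
      by (intro bexI[of _ "(vx (nxt t), 0)"]) (auto simp: nd_refl)
  next
    case False
    have a: "vx (prv t) \<in> V" "vx (nxt t) \<in> V" using vx(2) prv(1)[OF False] nxt(1)[OF ne] by auto
    have ft: "f t = pos A (W (vx (prv t)) (vx (nxt t))) (t - prv t)" using False ne by (simp add: f_def)
    have "\<exists>(w,\<alpha>)\<in>anchors A (f t). w \<in> V \<and> \<alpha> + nd w (last (W (vx (prv t)) (vx (nxt t))))
           \<le> max 0 (rlen A (W (vx (prv t)) (vx (nxt t))) - (t - prv t))"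
      unfolding ft by (rule pos_fwd) (use W[OF a] a prv(2)[OF False] in auto)
    moreover have "rlen A (W (vx (prv t)) (vx (nxt t))) \<le> nxt t - prv t"
    proof -
      have "nd (vx (prv t)) (vx (nxt t)) \<le> \<bar>prv t - nxt t\<bar>"
        by (rule P) (use vx(1) prv(1)[OF False] nxt(1)[OF ne] in auto)
      then show ?thesis using W(4)[OF a] prv(2)[OF False] nxt(2)[OF ne] by simp
    qed
    ultimately show ?thesis using W(3)[OF a] nxt(2)[OF ne] by force
  qed
  have bwd: "\<exists>(w,\<beta>)\<in>anchors A (f t). w \<in> V \<and> nd (vx (prv t)) w + \<beta> \<le> t - prv t"
    if ne: "D \<inter> {..t} \<noteq> {}" for t
  proof (cases "D \<inter> {t..} = {}")
    case True
    then have "f t = Vtx (vx (prv t))" using ne by (simp add: f_def)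
    then show ?thesis using vx(2)[OF prv(1)[OF ne]] prv(2)[OF ne]
      by (intro bexI[of _ "(vx (prv t), 0)"]) (auto simp: nd_refl)
  next
    case False
    have a: "vx (prv t) \<in> V" "vx (nxt t) \<in> V" using vx(2) prv(1)[OF ne] nxt(1)[OF False] by auto
    have ft: "f t = pos A (W (vx (prv t)) (vx (nxt t))) (t - prv t)" using False ne by (simp add: f_def)
    have "\<exists>(w,\<beta>)\<in>anchors A (f t). w \<in> V \<and> nd (hd (W (vx (prv t)) (vx (nxt t)))) w + \<beta> \<le> t - prv t"
      unfolding ft by (rule pos_bwd) (use W[OF a] a prv(2)[OF ne] in auto)
    then show ?thesis using W(2)[OF a] by simp
  qed
  have lip: "mdist E A (f t) (f t') \<le> t' - t" if tt: "0 \<le> t" "t \<le> t'" for t t'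
  proof (cases "\<exists>d\<in>D. t \<le> d \<and> d \<le> t'")
    case True
    then obtain d where d: "d \<in> D" "t \<le> d" "d \<le> t'" by blast
    then have ne: "D \<inter> {t..} \<noteq> {}" "D \<inter> {..t'} \<noteq> {}" by auto
    obtain w \<alpha> where wa: "(w,\<alpha>) \<in> anchors A (f t)" "w \<in> V" "\<alpha> + nd w (vx (nxt t)) \<le> nxt t - t"
      using fwd[OF ne(1)] by blast
    obtain w' \<beta> where wb: "(w',\<beta>) \<in> anchors A (f t')" "w' \<in> V" "nd (vx (prv t')) w' + \<beta> \<le> t' - prv t'"
      using bwd[OF ne(2)] by blast
    have le: "nxt t \<le> prv t'" using nxt(3)[OF ne(1) d(1,2)] prv(3)[OF ne(2) d(1,3)] by simp
    have b: "vx (nxt t) \<in> V" "(nxt t, vx (nxt t)) \<in> R" using vx nxt(1)[OF ne(1)] by auto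
    have c: "vx (prv t') \<in> V" "(prv t', vx (prv t')) \<in> R" using vx prv(1)[OF ne(2)] by auto
    have bc: "nd (vx (nxt t)) (vx (prv t')) \<le> prv t' - nxt t" using P[OF b(2) c(2)] le by simp
    have t1: "nd w w' \<le> nd w (vx (nxt t)) + nd (vx (nxt t)) w'" by (rule nd_tri) (use wa b wb in auto)
    have t2: "nd (vx (nxt t)) w' \<le> nd (vx (nxt t)) (vx (prv t')) + nd (vx (prv t')) w'"
      by (rule nd_tri) (use wa b c wb in auto)
    have "mdist E A (f t) (f t') \<le> \<alpha> + nd w w' + \<beta>" by (rule mdist_le_anchor[OF wa(1) wb(1)])
    then show ?thesis using wa(3) wb(3) bc t1 t2 by linarith
  next
    case False
    have s1: "D \<inter> {..t'} = D \<inter> {..t}" using False tt by force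
    have s2: "D \<inter> {t'..} = D \<inter> {t..}" using False tt by force
    have p: "prv t' = prv t" unfolding prv_def s1 ..
    have n: "nxt t' = nxt t" unfolding nxt_def s2 ..
    have ft': "f t' = (if D \<inter> {..t} = {} then (if D \<inter> {t..} = {} then Vtx v0 else Vtx (vx (nxt t)))
       else if D \<inter> {t..} = {} then Vtx (vx (prv t))
       else pos A (W (vx (prv t)) (vx (nxt t))) (t' - prv t))"
      unfolding f_def s1 s2 p n ..
    show ?thesis
    proof (cases "D \<inter> {..t} \<noteq> {} \<and> D \<inter> {t..} \<noteq> {}")
      case True
      have a: "vx (prv t) \<in> V" "vx (nxt t) \<in> V" using vx(2) prv(1) nxt(1) True by auto
      have "mdist E A (pos A (W (vx (prv t)) (vx (nxt t))) (t - prv t)) (pos A (W (vx (prv t)) (vx (nxt t))) (t' - prv t))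
            \<le> (t' - prv t) - (t - prv t)"
        by (rule pos_arc) (use W[OF a] a prv(2) True tt in auto)
      then show ?thesis using True ft' by (simp add: f_def)
    next
      case False
      then have "f t' = f t" using ft' by (auto simp: f_def)
      moreover have "mdist E A (f t) (f t) = 0"
        using False by (auto simp: f_def mdist_vtx nd_refl)
      ultimately show ?thesis using tt by simp
    qed
  qed
  show ?thesis
  proof (intro exI[of _ f] conjI allI impI)
    show "valid_pt V E A (f t)" for t by (rule valid)
    show "f t = Vtx v" if "(t,v) \<in> R" for t v using visit that by blast
    show "mdist E A (f t) (f t') \<le> \<bar>t - t'\<bar>" if "0 \<le> t" "0 \<le> t'" for t t'
    proof (cases "t \<le> t'")
      case True then show ?thesis using lip[OF that(1) True] by simp
    next
      case False then show ?thesis using lip[OF that(2)] mdist_sym[of E A "f t" "f t'"] by simp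
    qed
  qed
qed

end

definition filt :: "nat set set \<Rightarrow> bool" where
  "filt F \<longleftrightarrow> {} \<notin> F \<and> (\<forall>X Y. X \<in> F \<longrightarrow> X \<subseteq> Y \<longrightarrow> Y \<in> F) \<and> (\<forall>X\<in>F. \<forall>Y\<in>F. X \<inter> Y \<in> F)
     \<and> (\<forall>N. {N..} \<in> F)"

definition ufilt :: "nat set set \<Rightarrow> bool" where
  "ufilt U \<longleftrightarrow> filt U \<and> (\<forall>X. X \<in> U \<or> - X \<in> U)"

lemma uf_exists: "\<exists>U. ufilt U"
proof -
  let ?S = "{F. filt F}"
  have "\<exists>M\<in>?S. \<forall>X\<in>?S. M \<subseteq> X \<longrightarrow> X = M"
  proof (rule Zorn_Lemma2, rule ballI)
    fix C assume C: "C \<in> chains ?S"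
    show "\<exists>U\<in>?S. \<forall>X\<in>C. X \<subseteq> U"
    proof (cases "C = {}")
      case True
      have "filt {X. \<exists>N. {N..} \<subseteq> X}" unfolding filt_def
      proof (intro conjI allI impI ballI)
        show "{} \<notin> {X. \<exists>N::nat. {N..} \<subseteq> X}"
        proof
          assume "{} \<in> {X. \<exists>N::nat. {N..} \<subseteq> X}"
          then obtain N :: nat where N: "{N..} \<subseteq> {}" by blast
          have "N \<in> {N..}" by simp
          then show False using N by blast
        qed
        show "X \<inter> Y \<in> {X. \<exists>N::nat. {N..} \<subseteq> X}" if h: "X \<in> {X. \<exists>N::nat. {N..} \<subseteq> X}" "Y \<in> {X. \<exists>N::nat. {N..} \<subseteq> X}" for X Y :: "nat set"
        proof -
          obtain N1 N2 :: nat where "{N1..} \<subseteq> X" "{N2..} \<subseteq> Y" using h by auto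
          then have "{max N1 N2..} \<subseteq> X \<inter> Y" by auto
          then show ?thesis by blast
        qed
      qed auto
      then show ?thesis using True by blast
    next
      case False
      have ch: "C \<subseteq> ?S" "\<And>A B. A \<in> C \<Longrightarrow> B \<in> C \<Longrightarrow> A \<subseteq> B \<or> B \<subseteq> A"
        using C by (auto simp: chains_def chain_subset_def)
      have "filt (\<Union>C)" unfolding filt_def
      proof (intro conjI allI impI ballI)
        show "{} \<notin> \<Union>C" using ch(1) by (auto simp: filt_def)
        show "Y \<in> \<Union>C" if h: "X \<in> \<Union>C" "X \<subseteq> Y" for X Y
        proof -
          obtain F where F: "F \<in> C" "X \<in> F" using h by auto
          then have "Y \<in> F" using ch(1) h(2) unfolding filt_def by blast
          then show ?thesis using F by blast
        qed
        show "X \<inter> Y \<in> \<Union>C" if h: "X \<in> \<Union>C" "Y \<in> \<Union>C" for X Y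
        proof -
          obtain F1 F2 where F: "F1 \<in> C" "F2 \<in> C" "X \<in> F1" "Y \<in> F2" using h by auto
          have f1: "filt F1" "filt F2" using F ch(1) by auto
          from ch(2)[OF F(1,2)] show ?thesis
          proof
            assume "F1 \<subseteq> F2"
            then have "X \<inter> Y \<in> F2" using f1(2) F unfolding filt_def by blast
            then show ?thesis using F by blast
          next
            assume "F2 \<subseteq> F1"
            then have "X \<inter> Y \<in> F1" using f1(1) F unfolding filt_def by blast
            then show ?thesis using F by blast
          qed
        qed
        show "{N..} \<in> \<Union>C" for N
        proof -
          obtain F where F: "F \<in> C" using False by blast
          then have "{N..} \<in> F" using ch(1) unfolding filt_def by blast
          then show ?thesis using F by blast
        qed
      qed
      then show ?thesis by blast
    qed
  qed
  then obtain M where M: "filt M" "\<And>X. filt X \<Longrightarrow> M \<subseteq> X \<Longrightarrow> X = M" by auto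
  have "X \<in> M \<or> - X \<in> M" for X
  proof (rule disjCI)
    assume nX: "- X \<notin> M"
    define M' where "M' = {Y. \<exists>Z\<in>M. Z \<inter> X \<subseteq> Y}"
    have UM: "UNIV \<in> M" using M(1) unfolding filt_def by (metis atLeast_0)
    have "filt M'" unfolding filt_def
    proof (intro conjI allI impI ballI)
      show "{} \<notin> M'"
      proof
        assume "{} \<in> M'"
        then obtain Z where "Z \<in> M" "Z \<inter> X \<subseteq> {}" unfolding M'_def by auto
        then have "Z \<subseteq> - X" by auto
        then show False using nX M(1) \<open>Z \<in> M\<close> unfolding filt_def by blast
      qed
      show "Y' \<in> M'" if "Y \<in> M'" "Y \<subseteq> Y'" for Y Y' using that unfolding M'_def by blast
      show "Y1 \<inter> Y2 \<in> M'" if h: "Y1 \<in> M'" "Y2 \<in> M'" for Y1 Y2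
      proof -
        obtain Z1 Z2 where "Z1 \<in> M" "Z2 \<in> M" "Z1 \<inter> X \<subseteq> Y1" "Z2 \<inter> X \<subseteq> Y2" using h unfolding M'_def by auto
        moreover then have "Z1 \<inter> Z2 \<in> M" using M(1) unfolding filt_def by blast
        ultimately show ?thesis unfolding M'_def by blast
      qed
      show "{N..} \<in> M'" for N using M(1) unfolding M'_def filt_def by blast
    qed
    moreover have "M \<subseteq> M'" unfolding M'_def by blast
    ultimately have "M' = M" using M(2) by blast
    moreover have "X \<in> M'" using UM unfolding M'_def by blast
    ultimately show "X \<in> M" by simp
  qed
  then show ?thesis using M(1) unfolding ufilt_def by blast
qed

lemma uf_up: "ufilt U \<Longrightarrow> X \<in> U \<Longrightarrow> X \<subseteq> Y \<Longrightarrow> Y \<in> U"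
  unfolding ufilt_def filt_def by blast

lemma uf_Int: "ufilt U \<Longrightarrow> X \<in> U \<Longrightarrow> Y \<in> U \<Longrightarrow> X \<inter> Y \<in> U"
  unfolding ufilt_def filt_def by blast

lemma uf_ne: "ufilt U \<Longrightarrow> X \<in> U \<Longrightarrow> \<exists>n. n \<in> X"
  unfolding ufilt_def filt_def by (metis ex_in_conv)

lemma uf_cofin: "ufilt U \<Longrightarrow> \<forall>n\<ge>N. P n \<Longrightarrow> {n. P n} \<in> U"
  unfolding ufilt_def filt_def by (metis atLeast_iff subsetI mem_Collect_eq)

lemma uf_ev: "ufilt U \<Longrightarrow> eventually P sequentially \<Longrightarrow> {n. P n} \<in> U"
  unfolding eventually_sequentially by (metis uf_cofin)

lemma uf_Un: "ufilt U \<Longrightarrow> X \<union> Y \<in> U \<Longrightarrow> X \<in> U \<or> Y \<in> U"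
proof -
  assume u: "ufilt U" "X \<union> Y \<in> U"
  show ?thesis
  proof (cases "X \<in> U")
    case False
    then have "- X \<in> U" using u unfolding ufilt_def by blast
    then have "(X \<union> Y) \<inter> - X \<in> U" using uf_Int u by blast
    then have "Y \<in> U" using uf_up[OF u(1)] by blast
    then show ?thesis by blast
  qed simp
qed

lemma uf_UN: "ufilt U \<Longrightarrow> (\<Union>i<(k::nat). X i) \<in> U \<Longrightarrow> \<exists>i<k. X i \<in> U"
proof (induction k)
  case 0 then show ?case unfolding ufilt_def filt_def by simp
next
  case (Suc k)
  have "(\<Union>i<Suc k. X i) = (\<Union>i<k. X i) \<union> X k" by (auto simp: lessThan_Suc)
  then show ?case using Suc uf_Un[of U "(\<Union>i<k. X i)" "X k"] by (metis less_Suc_eq)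
qed

lemma uf_lim:
  fixes s :: "nat \<Rightarrow> real"
  assumes u: "ufilt U" and b: "{n. lo \<le> s n \<and> s n \<le> hi} \<in> U"
  shows "\<exists>l. lo \<le> l \<and> l \<le> hi \<and> (\<forall>\<epsilon>>0. {n. \<bar>s n - l\<bar> < \<epsilon>} \<in> U)"
proof -
  define X where "X = {x. {n. x \<le> s n} \<in> U}"
  have loX: "lo \<in> X" unfolding X_def mem_Collect_eq by (rule uf_up[OF u b]) auto
  have hiX: "x \<le> hi" if "x \<in> X" for x
  proof (rule ccontr)
    assume "\<not> x \<le> hi"
    have "{n. x \<le> s n} \<inter> {n. lo \<le> s n \<and> s n \<le> hi} \<in> U" using that b uf_Int[OF u] unfolding X_def by blast
    moreover have "{n. x \<le> s n} \<inter> {n. lo \<le> s n \<and> s n \<le> hi} = {}" using \<open>\<not> x \<le> hi\<close> by auto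
    ultimately show False using u unfolding ufilt_def filt_def by simp
  qed
  have bd: "bdd_above X" using hiX by (intro bdd_aboveI[of _ hi]) blast
  define l where "l = Sup X"
  have "lo \<le> l" unfolding l_def using loX bd by (rule cSup_upper)
  moreover have "l \<le> hi" unfolding l_def using loX hiX by (intro cSup_least) auto
  moreover have "{n. \<bar>s n - l\<bar> < \<epsilon>} \<in> U" if "\<epsilon> > 0" for \<epsilon>
  proof -
    have "l - \<epsilon> < Sup X" using that l_def by simp
    then obtain x where "x \<in> X" "l - \<epsilon> < x" using less_cSupD[of X] loX by blast
    then have A1: "{n. l - \<epsilon> < s n} \<in> U" unfolding X_def by (rule_tac uf_up[OF u]) auto
    have "l + \<epsilon>/2 \<notin> X"
    proof
      assume "l + \<epsilon>/2 \<in> X"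
      then have "l + \<epsilon>/2 \<le> l" unfolding l_def using bd by (rule cSup_upper)
      then show False using that by simp
    qed
    then have "- {n. l + \<epsilon>/2 \<le> s n} \<in> U" using u unfolding X_def ufilt_def by blast
    then have "{n. l - \<epsilon> < s n} \<inter> - {n. l + \<epsilon>/2 \<le> s n} \<in> U" using A1 uf_Int[OF u] by blast
    then show ?thesis by (rule uf_up[OF u]) (auto simp: abs_less_iff)
  qed
  ultimately show ?thesis by blast
qed

context pg begin

lemma strat_lip: assumes "rho \<in> strategies V E A k" "i < k" "0 \<le> s" "0 \<le> s'"
  shows "mdist E A (rho s i) (rho s' i) \<le> \<bar>s - s'\<bar>"
proof -
  have "mdist E A (rho s i) (rho s' i) \<le> Max ((\<lambda>i. mdist E A (rho s i) (rho s' i)) ` {..<k})"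
    using assms(2) by (intro Max_ge) auto
  also have "\<dots> \<le> \<bar>s - s'\<bar>" using assms unfolding strategies_def by blast
  finally show ?thesis .
qed

lemma strat_nd: assumes "rho \<in> strategies V E A k" "i < k" "0 \<le> s" "0 \<le> s'"
  "rho s i = Vtx a" "rho s' i = Vtx b"
  shows "nd a b \<le> \<bar>s - s'\<bar>"
  using strat_lip[OF assms(1-4)] assms(5,6) by (simp add: mdist_vtx)

lemma core:
  fixes cn :: "nat \<Rightarrow> real" and rho :: "nat \<Rightarrow> real \<Rightarrow> nat \<Rightarrow> 'v mpoint"
  assumes k: "k \<ge> 1"
    and rho: "\<And>n. rho n \<in> strategies V E A k"
    and cn: "cn \<longlonglongrightarrow> c"
    and H: "\<And>n t v \<delta>. T0 \<le> t \<Longrightarrow> v \<in> V \<Longrightarrow> cn n / phi v + B < t \<Longrightarrow> \<delta> > 0 \<Longrightarrow>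
            \<exists>s i. i < k \<and> 0 \<le> s \<and> t - (cn n / phi v + \<delta>) \<le> s \<and> s \<le> t \<and> rho n s i = Vtx v"
  shows "\<exists>\<pi>\<in>strategies V E A k. \<forall>t v. T0 \<le> t \<longrightarrow> v \<in> V \<longrightarrow> c / phi v + B < t \<longrightarrow>
            (\<exists>s i. i < k \<and> 0 \<le> s \<and> t - c / phi v \<le> s \<and> s \<le> t \<and> \<pi> s i = Vtx v)"
proof -
  obtain U where U: "ufilt U" using uf_exists by blast
  define Vis where "Vis i = {(t,v). 0 \<le> t \<and> v \<in> V \<and>
      (\<forall>\<epsilon>>0. {n. \<exists>s. 0 \<le> s \<and> \<bar>s - t\<bar> < \<epsilon> \<and> rho n s i = Vtx v} \<in> U)}" for i
  have real: "\<exists>f. (\<forall>t\<ge>0. valid_pt V E A (f t)) \<and> (\<forall>t v. (t,v) \<in> Vis i \<longrightarrow> f t = Vtx v) \<and>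
             (\<forall>t\<ge>0. \<forall>t'\<ge>0. mdist E A (f t) (f t') \<le> \<bar>t - t'\<bar>)" if ik: "i < k" for i
  proof (rule realize)
    show "Vis i \<subseteq> {t. 0 \<le> t} \<times> V" unfolding Vis_def by auto
    show "nd a b \<le> \<bar>t - t'\<bar>" if h: "(t,a) \<in> Vis i" "(t',b) \<in> Vis i" for t a t' b
    proof (rule field_le_epsilon)
      fix e :: real assume e: "0 < e"
      have "{n. \<exists>s. 0 \<le> s \<and> \<bar>s - t\<bar> < e/2 \<and> rho n s i = Vtx a} \<in> U"
           "{n. \<exists>s. 0 \<le> s \<and> \<bar>s - t'\<bar> < e/2 \<and> rho n s i = Vtx b} \<in> U"
      proof -
        have hv: "\<forall>\<epsilon>>0. {n. \<exists>s. 0 \<le> s \<and> \<bar>s - t\<bar> < \<epsilon> \<and> rho n s i = Vtx a} \<in> U"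
          "\<forall>\<epsilon>>0. {n. \<exists>s. 0 \<le> s \<and> \<bar>s - t'\<bar> < \<epsilon> \<and> rho n s i = Vtx b} \<in> U"
          using h unfolding Vis_def by auto
        have e2: "e/2 > 0" using e by simp
        show "{n. \<exists>s. 0 \<le> s \<and> \<bar>s - t\<bar> < e/2 \<and> rho n s i = Vtx a} \<in> U"
          using hv(1) e2 by blast
        show "{n. \<exists>s. 0 \<le> s \<and> \<bar>s - t'\<bar> < e/2 \<and> rho n s i = Vtx b} \<in> U"
          using hv(2) e2 by blast
      qed
      then have "{n. \<exists>s. 0 \<le> s \<and> \<bar>s - t\<bar> < e/2 \<and> rho n s i = Vtx a} \<inter>
                 {n. \<exists>s. 0 \<le> s \<and> \<bar>s - t'\<bar> < e/2 \<and> rho n s i = Vtx b} \<in> U"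
        by (rule uf_Int[OF U])
      then obtain n s s' where ss: "0 \<le> s" "\<bar>s - t\<bar> < e/2" "rho n s i = Vtx a"
        "0 \<le> s'" "\<bar>s' - t'\<bar> < e/2" "rho n s' i = Vtx b"
        using uf_ne[OF U] by blast
      have "nd a b \<le> \<bar>s - s'\<bar>" by (rule strat_nd[OF rho ik ss(1) ss(4) ss(3) ss(6)])
      then show "nd a b \<le> \<bar>t - t'\<bar> + e" using ss(2,5) by linarith
    qed
    show "closed {t. (t,v) \<in> Vis i}" for v
    proof -
      have visD: "0 \<le> y \<and> w \<in> V \<and> (\<forall>\<epsilon>>0. {n. \<exists>s. 0 \<le> s \<and> \<bar>s - y\<bar> < \<epsilon> \<and> rho n s i = Vtx w} \<in> U)"
        if "(y,w) \<in> Vis i" for y w using that unfolding Vis_def by simp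
      have "closure {t. (t,v) \<in> Vis i} \<subseteq> {t. (t,v) \<in> Vis i}"
      proof
        fix x assume "x \<in> closure {t. (t,v) \<in> Vis i}"
        then have ap: "\<And>\<epsilon>. \<epsilon> > 0 \<Longrightarrow> \<exists>y. (y,v) \<in> Vis i \<and> \<bar>y - x\<bar> < \<epsilon>"
          by (simp add: closure_approachable dist_real_def)
        have x0: "0 \<le> x"
        proof (rule ccontr)
          assume "\<not> 0 \<le> x"
          then have "- x > 0" by simp
          then obtain y where "(y,v) \<in> Vis i" "\<bar>y - x\<bar> < - x" using ap by blast
          then show False using visD by fastforce
        qed
        obtain y0 where "(y0,v) \<in> Vis i" using ap[of 1] by auto
        then have vV: "v \<in> V" using visD by blast
        have "{n. \<exists>s. 0 \<le> s \<and> \<bar>s - x\<bar> < \<epsilon> \<and> rho n s i = Vtx v} \<in> U" if e: "\<epsilon> > 0" for \<epsilon>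
        proof -
          have e2: "\<epsilon>/2 > 0" using e by simp
          obtain y where y: "(y,v) \<in> Vis i" "\<bar>y - x\<bar> < \<epsilon>/2" using ap[OF e2] by blast
          have "{n. \<exists>s. 0 \<le> s \<and> \<bar>s - y\<bar> < \<epsilon>/2 \<and> rho n s i = Vtx v} \<in> U"
            using visD[OF y(1)] e2 by blast
          note X = this
          show ?thesis
          proof (rule uf_up[OF U X], rule subsetI)
            fix n assume "n \<in> {n. \<exists>s. 0 \<le> s \<and> \<bar>s - y\<bar> < \<epsilon>/2 \<and> rho n s i = Vtx v}"
            then obtain s where "0 \<le> s" "\<bar>s - y\<bar> < \<epsilon>/2" "rho n s i = Vtx v" by blast
            moreover have "\<bar>s - x\<bar> < \<epsilon>" using \<open>\<bar>s - y\<bar> < \<epsilon>/2\<close> y(2) by linarith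
            ultimately show "n \<in> {n. \<exists>s. 0 \<le> s \<and> \<bar>s - x\<bar> < \<epsilon> \<and> rho n s i = Vtx v}" by blast
          qed
        qed
        then show "x \<in> {t. (t,v) \<in> Vis i}" using x0 vV unfolding Vis_def by blast
      qed
      then show ?thesis by (simp add: closure_subset_eq)
    qed
  qed
  then have "\<forall>i\<in>{..<k}. \<exists>f. (\<forall>t\<ge>0. valid_pt V E A (f t)) \<and> (\<forall>t v. (t,v) \<in> Vis i \<longrightarrow> f t = Vtx v) \<and>
             (\<forall>t\<ge>0. \<forall>t'\<ge>0. mdist E A (f t) (f t') \<le> \<bar>t - t'\<bar>)" by blast
  from bchoice[OF this] obtain F where F0: "\<forall>i\<in>{..<k}. (\<forall>t\<ge>0. valid_pt V E A (F i t)) \<and> (\<forall>t v. (t,v) \<in> Vis i \<longrightarrow> F i t = Vtx v) \<and>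
             (\<forall>t\<ge>0. \<forall>t'\<ge>0. mdist E A (F i t) (F i t') \<le> \<bar>t - t'\<bar>)" by blast
  have F: "(\<forall>t\<ge>0. valid_pt V E A (F i t)) \<and> (\<forall>t v. (t,v) \<in> Vis i \<longrightarrow> F i t = Vtx v) \<and>
             (\<forall>t\<ge>0. \<forall>t'\<ge>0. mdist E A (F i t) (F i t') \<le> \<bar>t - t'\<bar>)" if "i < k" for i
    using F0 that by blast
  define \<pi> where "\<pi> t i = F i t" for t i
  have kne: "{..<k} \<noteq> {}"
  proof -
    have "0 \<in> {..<k}" using k by simp
    then show ?thesis by blast
  qed
  have pis: "\<pi> \<in> strategies V E A k"
    unfolding strategies_def
  proof (intro CollectI conjI allI impI)
    show "valid_pt V E A (\<pi> t i)" if "0 \<le> t" "i < k" for t i using F that unfolding \<pi>_def by blast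
    show "Max ((\<lambda>i. mdist E A (\<pi> t i) (\<pi> t' i)) ` {..<k}) \<le> \<bar>t - t'\<bar>" if "0 \<le> t" "0 \<le> t'" for t t'
      using F that kne by (subst Max_le_iff) (auto simp: \<pi>_def)
  qed
  have lim: "\<exists>s i. i < k \<and> 0 \<le> s \<and> t - c / phi v \<le> s \<and> s \<le> t \<and> \<pi> s i = Vtx v"
    if tv: "T0 \<le> t" "v \<in> V" "c / phi v + B < t" for t v
  proof -
    define p where "p = phi v"
    have p: "p > 0" using phipos tv unfolding p_def by auto
    have cnp: "(\<lambda>n. cn n / p) \<longlonglongrightarrow> c / p" using cn p by (intro tendsto_divide tendsto_const) auto
    have ev1: "eventually (\<lambda>n. cn n / p < t - B) sequentially"
      by (rule order_tendstoD(2)[OF cnp]) (use tv in \<open>simp add: p_def\<close>)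
    define G where "G = {n. cn n / p < t - B}"
    have GU: "G \<in> U" unfolding G_def using uf_ev[OF U ev1] .
    define Q where "Q n si = (snd si < k \<and> 0 \<le> fst si \<and> t - (cn n / p + 1 / real (Suc n)) \<le> fst si \<and> fst si \<le> t
        \<and> rho n (fst si) (snd si) = Vtx v)" for n si
    define sel where "sel n = (SOME si. Q n si)" for n
    have selQ: "Q n (sel n)" if "n \<in> G" for n
    proof -
      have "\<exists>s i. i < k \<and> 0 \<le> s \<and> t - (cn n / phi v + 1 / real (Suc n)) \<le> s \<and> s \<le> t \<and> rho n s i = Vtx v"
        by (rule H) (use tv that in \<open>auto simp: G_def p_def\<close>)
      then have "\<exists>si. Q n si" unfolding Q_def p_def by auto
      then show ?thesis unfolding sel_def by (rule someI_ex)
    qed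
    define s where "s n = fst (sel n)" for n
    define ii where "ii n = snd (sel n)" for n
    have sQ: "ii n < k" "0 \<le> s n" "t - (cn n / p + 1 / real (Suc n)) \<le> s n" "s n \<le> t" "rho n (s n) (ii n) = Vtx v"
      if "n \<in> G" for n using selQ[OF that] unfolding Q_def s_def ii_def by auto
    have bU: "{n. B - 1 \<le> s n \<and> s n \<le> t} \<in> U"
    proof (rule uf_up[OF U GU], rule subsetI)
      fix n assume n: "n \<in> G"
      have "1 / real (Suc n) \<le> 1" by simp
      moreover have "t - (cn n / p + 1 / real (Suc n)) \<le> s n" by (rule sQ(3)[OF n])
      moreover have "cn n / p < t - B" using n unfolding G_def by simp
      moreover have "s n \<le> t" by (rule sQ(4)[OF n])
      ultimately have "B - 1 \<le> s n \<and> s n \<le> t" by linarith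
      then show "n \<in> {n. B - 1 \<le> s n \<and> s n \<le> t}" by simp
    qed
    obtain l where l: "B - 1 \<le> l" "l \<le> t" "\<And>\<epsilon>. \<epsilon> > 0 \<Longrightarrow> {n. \<bar>s n - l\<bar> < \<epsilon>} \<in> U"
      using uf_lim[OF U bU] by blast
    have Geq: "G = (\<Union>i<k. {n \<in> G. ii n = i})"
    proof
      show "G \<subseteq> (\<Union>i<k. {n \<in> G. ii n = i})"
      proof
        fix n assume n: "n \<in> G"
        then have "ii n < k" by (rule sQ(1))
        then show "n \<in> (\<Union>i<k. {n \<in> G. ii n = i})" using n by blast
      qed
    qed blast
    have "(\<Union>i<k. {n \<in> G. ii n = i}) \<in> U" using GU Geq by simp
    then obtain i0 where i0: "i0 < k" "{n \<in> G. ii n = i0} \<in> U" using uf_UN[OF U] by blast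
    have near: "\<exists>n. n \<in> G \<and> ii n = i0 \<and> \<bar>s n - l\<bar> < \<epsilon> \<and> cn n / p + 1 / real (Suc n) < c / p + \<epsilon>"
      if e: "\<epsilon> > 0" for \<epsilon>
    proof -
      have c1: "(\<lambda>n. cn n / p + 1 / real (Suc n)) \<longlonglongrightarrow> c / p + 0"
        by (intro tendsto_add cnp LIMSEQ_Suc[OF lim_1_over_n])
      have "eventually (\<lambda>n. cn n / p + 1 / real (Suc n) < c / p + \<epsilon>) sequentially"
        by (rule order_tendstoD(2)[OF c1]) (use e in simp)
      then have "{n. cn n / p + 1 / real (Suc n) < c / p + \<epsilon>} \<in> U" by (rule uf_ev[OF U])
      then have "{n \<in> G. ii n = i0} \<inter> {n. \<bar>s n - l\<bar> < \<epsilon>} \<inter> {n. cn n / p + 1 / real (Suc n) < c / p + \<epsilon>} \<in> U"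
        using i0(2) l(3)[OF e] uf_Int[OF U] by blast
      then show ?thesis using uf_ne[OF U] by blast
    qed
    have l0: "0 \<le> l"
    proof (rule field_le_epsilon)
      fix e :: real assume "0 < e"
      then obtain n where "n \<in> G" "\<bar>s n - l\<bar> < e" using near by blast
      then show "0 \<le> l + e" using sQ(2)[of n] by linarith
    qed
    have lt: "t - c / p \<le> l"
    proof (rule field_le_epsilon)
      fix e :: real assume "0 < e"
      then have "e/2 > 0" by simp
      then obtain n where n: "n \<in> G" "\<bar>s n - l\<bar> < e/2" "cn n / p + 1 / real (Suc n) < c / p + e/2" using near by blast
      then show "t - c / p \<le> l + e" using sQ(3)[OF n(1)] by linarith
    qed
    have "(l, v) \<in> Vis i0"
      unfolding Vis_def
    proof (intro CollectI case_prodI conjI allI impI)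
      show "0 \<le> l" by (rule l0)
      show "v \<in> V" by (rule tv)
      show "{n. \<exists>s. 0 \<le> s \<and> \<bar>s - l\<bar> < \<epsilon> \<and> rho n s i0 = Vtx v} \<in> U" if e: "\<epsilon> > 0" for \<epsilon>
      proof -
        have "{n \<in> G. ii n = i0} \<inter> {n. \<bar>s n - l\<bar> < \<epsilon>} \<in> U" using i0(2) l(3)[OF e] uf_Int[OF U] by blast
        note X = this
        show ?thesis
        proof (rule uf_up[OF U X], rule subsetI)
          fix n assume "n \<in> {n \<in> G. ii n = i0} \<inter> {n. \<bar>s n - l\<bar> < \<epsilon>}"
          then have n: "n \<in> G" "ii n = i0" "\<bar>s n - l\<bar> < \<epsilon>" by auto
          have "0 \<le> s n" "rho n (s n) i0 = Vtx v" using sQ(2,5)[OF n(1)] n(2) by auto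
          then show "n \<in> {n. \<exists>s. 0 \<le> s \<and> \<bar>s - l\<bar> < \<epsilon> \<and> rho n s i0 = Vtx v}" using n(3) by blast
        qed
      qed
    qed
    then have "\<pi> l i0 = Vtx v" using F[OF i0(1)] unfolding \<pi>_def by blast
    then show ?thesis using i0(1) l0 lt l(2) unfolding p_def by blast
  qed
  show ?thesis using pis lim by blast
qed

end

lemma lv_eq: "{t'. 0 \<le> t' \<and> t' \<le> t \<and> (\<exists>i<k. \<pi> t' i = Vtx v)} \<noteq> {} \<Longrightarrow>
    last_visit k \<pi> v t = Sup {t'. 0 \<le> t' \<and> t' \<le> t \<and> (\<exists>i<k. \<pi> t' i = Vtx v)}"
  unfolding last_visit_def Let_def by (rule if_not_P)

lemma lv_empty: "{t'. 0 \<le> t' \<and> t' \<le> t \<and> (\<exists>i<k. \<pi> t' i = Vtx v)} = {} \<Longrightarrow>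
    last_visit k \<pi> v t = 0"
  unfolding last_visit_def Let_def by (rule if_P)

lemma lv_ge: assumes "i < k" "0 \<le> s" "s \<le> t" "\<pi> s i = Vtx v"
  shows "s \<le> last_visit k \<pi> v t"
proof -
  let ?S = "{t'. 0 \<le> t' \<and> t' \<le> t \<and> (\<exists>i<k. \<pi> t' i = Vtx v)}"
  have sS: "s \<in> ?S" using assms by blast
  then have ne: "?S \<noteq> {}" by blast
  have "s \<le> Sup ?S" by (rule cSup_upper[OF sS]) (rule bdd_aboveI[of _ t], blast)
  then show ?thesis using lv_eq[OF ne] by simp
qed

lemma lv_nonneg: "0 \<le> last_visit k \<pi> v t"
proof -
  let ?S = "{t'. 0 \<le> t' \<and> t' \<le> t \<and> (\<exists>i<k. \<pi> t' i = Vtx v)}"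
  show ?thesis
  proof (cases "?S = {}")
    case False
    then obtain x where x: "x \<in> ?S" by blast
    have "x \<le> Sup ?S" by (rule cSup_upper[OF x]) (rule bdd_aboveI[of _ t], blast)
    moreover have "0 \<le> x" using x by blast
    ultimately show ?thesis using lv_eq[OF False] by simp
  next
    case True then show ?thesis using lv_empty[OF True] by simp
  qed
qed

lemma lat_le_t: "latency k \<pi> v t \<le> t"
  using lv_nonneg[of k \<pi> v t] unfolding latency_def by simp

lemma lat_nonneg: assumes "0 \<le> t" shows "0 \<le> latency k \<pi> v t"
proof -
  let ?S = "{t'. 0 \<le> t' \<and> t' \<le> t \<and> (\<exists>i<k. \<pi> t' i = Vtx v)}"
  have "last_visit k \<pi> v t \<le> t"
  proof (cases "?S = {}")
    case False
    have "Sup ?S \<le> t" by (rule cSup_least[OF False]) blast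
    then show ?thesis using lv_eq[OF False] by simp
  next
    case True then show ?thesis using lv_empty[OF True] assms by simp
  qed
  then show ?thesis unfolding latency_def by simp
qed

lemma lat_visit: assumes "i < k" "0 \<le> s" "t - L \<le> s" "s \<le> t" "\<pi> s i = Vtx v"
  shows "latency k \<pi> v t \<le> L"
proof -
  have "s \<le> last_visit k \<pi> v t" by (rule lv_ge) (use assms in auto)
  then show ?thesis using assms(3) unfolding latency_def by simp
qed

lemma lat_bound:
  assumes ph: "0 < ph" and l: "ph * latency k \<pi> v t \<le> C" and Ct: "C < ph * t" and d: "0 < \<delta>"
  shows "\<exists>s i. i < k \<and> 0 \<le> s \<and> t - (C / ph + \<delta>) \<le> s \<and> s \<le> t \<and> \<pi> s i = Vtx v"
proof -
  let ?S = "{t'. 0 \<le> t' \<and> t' \<le> t \<and> (\<exists>i<k. \<pi> t' i = Vtx v)}"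
  have l2: "latency k \<pi> v t \<le> C / ph" using l ph by (simp add: field_simps mult.commute)
  have Ct2: "C / ph < t" using Ct ph by (simp add: field_simps mult.commute)
  have ne: "?S \<noteq> {}"
  proof
    assume "?S = {}"
    then have "latency k \<pi> v t = t" unfolding latency_def using lv_empty by simp
    then show False using l2 Ct2 by simp
  qed
  then have "t - C / ph \<le> Sup ?S" using l2 lv_eq[OF ne] unfolding latency_def by simp
  then have "t - (C / ph + \<delta>) < Sup ?S" using d by simp
  then obtain x where "x \<in> ?S" "t - (C / ph + \<delta>) < x" using less_cSupD[OF ne] by blast
  then show ?thesis by (auto intro: less_imp_le)
qed

context pg begin

lemma wl_ge: "v \<in> V \<Longrightarrow> phi v * latency k \<pi> v t \<le> worst_lat V phi k \<pi> t"
  unfolding worst_lat_def using finV by (intro Max_ge) auto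

lemma wl_le: "(\<And>v. v \<in> V \<Longrightarrow> phi v * latency k \<pi> v t \<le> C) \<Longrightarrow> worst_lat V phi k \<pi> t \<le> C"
  unfolding worst_lat_def using finV neV by (subst Max_le_iff) auto

lemma wl_nonneg: "0 \<le> t \<Longrightarrow> 0 \<le> worst_lat V phi k \<pi> t"
proof -
  assume t: "0 \<le> t"
  obtain v where v: "v \<in> V" using neV by blast
  have "0 \<le> phi v * latency k \<pi> v t" using phipos[OF v] lat_nonneg[OF t, of k \<pi> v] by simp
  then show ?thesis using wl_ge[OF v, of k \<pi> t] by linarith
qed

lemma shift_strat: assumes "rho \<in> strategies V E A k" "0 \<le> \<tau>"
  shows "(\<lambda>t i. rho (t + \<tau>) i) \<in> strategies V E A k"
  using assms unfolding strategies_def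
proof (intro CollectI conjI allI impI)
  fix t t' :: real assume h: "0 \<le> t" "0 \<le> t'"
  have "0 \<le> t + \<tau>" "0 \<le> t' + \<tau>" using h assms(2) by auto
  then have "Max ((\<lambda>i. mdist E A (rho (t + \<tau>) i) (rho (t' + \<tau>) i)) ` {..<k}) \<le> \<bar>(t + \<tau>) - (t' + \<tau>)\<bar>"
    using assms(1) unfolding strategies_def by blast
  then show "Max ((\<lambda>i. mdist E A (rho (t + \<tau>) i) (rho (t' + \<tau>) i)) ` {..<k}) \<le> \<bar>t - t'\<bar>" by simp
next
  fix t :: real and i assume h: "0 \<le> t" "i < k"
  have "0 \<le> t + \<tau>" using h assms(2) by auto
  then show "valid_pt V E A (rho (t + \<tau>) i)" using assms(1) h(2) unfolding strategies_def by blast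
qed

end

theorem mainTheorem1:
  fixes V :: "'v set" and E :: "'v set set" and A :: "'v set \<Rightarrow> real"
    and phi :: "'v \<Rightarrow> real" and k :: nat and T :: ereal
  assumes "graph_ok V E A phi"
    and "k \<ge> 1"
    and "T \<ge> 0"
  shows "\<exists>\<pi>s\<in>strategies V E A k.
           cost V phi k T \<pi>s = (INF \<pi>\<in>strategies V E A k. cost V phi k T \<pi>)"
proof -
  interpret pg V E A phi by unfold_locales (rule assms(1))
  let ?S = "strategies V E A k"
  let ?I = "INF \<pi>\<in>?S. cost V phi k T \<pi>"
  obtain v0 where v0: "v0 \<in> V" using neV by blast
  define \<pi>0 where "\<pi>0 = (\<lambda>(t::real) (i::nat). Vtx v0)"
  have kne: "{..<k} \<noteq> {}"
  proof -
    have "0 \<in> {..<k}" using assms(2) by simp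
    then show ?thesis by blast
  qed
  have pi0: "\<pi>0 \<in> ?S" unfolding strategies_def \<pi>0_def
    using v0 kne by (auto simp: valid_pt_def mdist_vtx nd_refl Max_le_iff)
  have cost_nonneg: "0 \<le> cost V phi k T \<pi>" for \<pi>
  proof (cases "T = \<infinity>")
    case True
    have "0 \<le> Limsup at_top (\<lambda>t. ereal (worst_lat V phi k \<pi> t))"
      by (rule le_Limsup) (auto simp: eventually_at_top_linorder intro!: exI[of _ 0] wl_nonneg)
    then show ?thesis using True by (simp add: cost_def)
  next
    case False
    have T0: "0 \<le> real_of_ereal T" using assms(3) by (simp add: real_of_ereal_pos)
    have "ereal (worst_lat V phi k \<pi> (real_of_ereal T)) \<le> (SUP t\<in>{real_of_ereal T..}. ereal (worst_lat V phi k \<pi> t))"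
      by (rule SUP_upper) simp
    moreover have "(0::ereal) \<le> ereal (worst_lat V phi k \<pi> (real_of_ereal T))" using wl_nonneg[OF T0] by simp
    ultimately have "(0::ereal) \<le> (SUP t\<in>{real_of_ereal T..}. ereal (worst_lat V phi k \<pi> t))" by (rule order_trans[rotated])
    then show ?thesis using False by (simp add: cost_def)
  qed
  have I0: "0 \<le> ?I" using cost_nonneg by (simp add: le_INF_iff)
  show ?thesis
  proof (cases "?I = \<infinity>")
    case True
    have "?I \<le> cost V phi k T \<pi>0" by (rule INF_lower[OF pi0])
    then have "cost V phi k T \<pi>0 = ?I" using True by simp
    then show ?thesis using pi0 by blast
  next
    case False
    then obtain c where c: "?I = ereal c" using I0 by (cases ?I) auto
    define cn where "cn n = c + 1 / real (Suc n)" for n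
    have cn: "cn \<longlonglongrightarrow> c" unfolding cn_def
      using tendsto_add[OF tendsto_const LIMSEQ_Suc[OF lim_1_over_n], of c] by simp
    have "\<exists>\<pi>\<in>?S. cost V phi k T \<pi> < ereal (cn n)" for n
    proof -
      have "?I < ereal (cn n)" unfolding c cn_def by simp
      then show ?thesis by (simp add: INF_less_iff)
    qed
    then have "\<forall>n. \<exists>\<pi>. \<pi> \<in> ?S \<and> cost V phi k T \<pi> < ereal (cn n)" by blast
    from choice[OF this] obtain rho where rho: "\<And>n. rho n \<in> ?S" "\<And>n. cost V phi k T (rho n) < ereal (cn n)"
      by blast
    show ?thesis
    proof (cases "T = \<infinity>")
      case False
      define T' where "T' = real_of_ereal T"
      have wlr: "worst_lat V phi k (rho n) t < cn n" if "T' \<le> t" for n t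
      proof -
        have "ereal (worst_lat V phi k (rho n) t) \<le> (SUP t\<in>{T'..}. ereal (worst_lat V phi k (rho n) t))"
          by (rule SUP_upper) (use that in simp)
        also have "\<dots> = cost V phi k T (rho n)" using False by (simp add: cost_def T'_def)
        also have "\<dots> < ereal (cn n)" by (rule rho(2))
        finally show ?thesis by simp
      qed
      have H: "\<exists>s i. i < k \<and> 0 \<le> s \<and> t - (cn n / phi v + \<delta>) \<le> s \<and> s \<le> t \<and> rho n s i = Vtx v"
        if "T' \<le> t" "v \<in> V" "cn n / phi v + 0 < t" "\<delta> > 0" for n t v \<delta>
      proof (rule lat_bound)
        show "0 < phi v" by (rule phipos[OF that(2)])
        show "phi v * latency k (rho n) v t \<le> cn n" using wl_ge[OF that(2), of k "rho n" t] wlr[OF that(1), of n] by simp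
        show "cn n < phi v * t" using that(3) phipos[OF that(2)] by (simp add: field_simps mult.commute)
        show "0 < \<delta>" by (rule that(4))
      qed
      obtain \<pi> where pis: "\<pi> \<in> ?S" and vis: "\<And>t v. T' \<le> t \<Longrightarrow> v \<in> V \<Longrightarrow> c / phi v + 0 < t \<Longrightarrow>
            (\<exists>s i. i < k \<and> 0 \<le> s \<and> t - c / phi v \<le> s \<and> s \<le> t \<and> \<pi> s i = Vtx v)"
        using core[OF assms(2) rho(1) cn H] by blast
      have "worst_lat V phi k \<pi> t \<le> c" if t: "T' \<le> t" for t
      proof (rule wl_le)
        fix v assume v: "v \<in> V"
        show "phi v * latency k \<pi> v t \<le> c"
        proof (cases "c / phi v < t")
          case True
          then obtain s i where si: "i < k" "0 \<le> s" "t - c / phi v \<le> s" "s \<le> t" "\<pi> s i = Vtx v"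
            using vis[OF t v] by auto
          have "latency k \<pi> v t \<le> c / phi v" by (rule lat_visit[of i k s t "c / phi v" \<pi> v, OF si])
          then show ?thesis using phipos[OF v] by (simp add: field_simps mult.commute)
        next
          case False
          have "latency k \<pi> v t \<le> c / phi v" using lat_le_t[of k \<pi> v t] False by simp
          then show ?thesis using phipos[OF v] by (simp add: field_simps mult.commute)
        qed
      qed
      then have "cost V phi k T \<pi> \<le> ereal c" using False
        by (simp add: cost_def T'_def[symmetric] SUP_le_iff)
      moreover have "?I \<le> cost V phi k T \<pi>" by (rule INF_lower[OF pis])
      ultimately show ?thesis using pis c by (intro bexI[of _ \<pi>]) auto
    next
      case True
      have "\<exists>N. \<forall>t\<ge>N. worst_lat V phi k (rho n) t < cn n" for n
      proof -
        have "Limsup at_top (\<lambda>t. ereal (worst_lat V phi k (rho n) t)) < ereal (cn n)"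
          using rho(2)[of n] True by (simp add: cost_def)
        then have "eventually (\<lambda>t. ereal (worst_lat V phi k (rho n) t) < ereal (cn n)) at_top"
          by (rule Limsup_lessD)
        then show ?thesis by (simp add: eventually_at_top_linorder)
      qed
      then have "\<forall>n. \<exists>N. \<forall>t\<ge>N. worst_lat V phi k (rho n) t < cn n" by blast
      from choice[OF this] obtain N where N: "\<And>n t. N n \<le> t \<Longrightarrow> worst_lat V phi k (rho n) t < cn n" by blast
      define \<tau> where "\<tau> n = max 0 (N n)" for n
      define sig where "sig n = (\<lambda>t i. rho n (t + \<tau> n) i)" for n
      have sig: "sig n \<in> ?S" for n unfolding sig_def by (rule shift_strat[OF rho(1)]) (simp add: \<tau>_def)
      have H: "\<exists>s i. i < k \<and> 0 \<le> s \<and> t - (cn n / phi v + \<delta>) \<le> s \<and> s \<le> t \<and> sig n s i = Vtx v"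
        if th: "0 \<le> t" "v \<in> V" "cn n / phi v + 1 < t" "\<delta> > 0" for n t v \<delta>
      proof -
        define d where "d = min \<delta> (1/2)"
        have d: "0 < d" "d \<le> \<delta>" "d \<le> 1/2" using th(4) by (auto simp: d_def)
        have tau: "0 \<le> \<tau> n" "N n \<le> t + \<tau> n" using th(1) by (auto simp: \<tau>_def)
        have p: "0 < phi v" by (rule phipos[OF th(2)])
        have "\<exists>s i. i < k \<and> 0 \<le> s \<and> (t + \<tau> n) - (cn n / phi v + d) \<le> s \<and> s \<le> t + \<tau> n \<and> rho n s i = Vtx v"
        proof (rule lat_bound[OF p _ _ d(1)])
          show "phi v * latency k (rho n) v (t + \<tau> n) \<le> cn n"
            using wl_ge[OF th(2), of k "rho n" "t + \<tau> n"] N[OF tau(2)] by simp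
          have "cn n / phi v < t + \<tau> n" using th(3) tau(1) by simp
          then show "cn n < phi v * (t + \<tau> n)" using p by (simp add: field_simps mult.commute)
        qed
        then obtain s i where si: "i < k" "0 \<le> s" "(t + \<tau> n) - (cn n / phi v + d) \<le> s" "s \<le> t + \<tau> n" "rho n s i = Vtx v"
          by blast
        have "0 \<le> s - \<tau> n" using si(3) th(3) d(3) by linarith
        moreover have "t - (cn n / phi v + \<delta>) \<le> s - \<tau> n" using si(3) d(2) by linarith
        moreover have "s - \<tau> n \<le> t" using si(4) by linarith
        moreover have "sig n (s - \<tau> n) i = Vtx v" using si(5) by (simp add: sig_def)
        ultimately show ?thesis using si(1) by blast
      qed
      obtain \<pi> where pis: "\<pi> \<in> ?S" and vis: "\<And>t v. 0 \<le> t \<Longrightarrow> v \<in> V \<Longrightarrow> c / phi v + 1 < t \<Longrightarrow>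
            (\<exists>s i. i < k \<and> 0 \<le> s \<and> t - c / phi v \<le> s \<and> s \<le> t \<and> \<pi> s i = Vtx v)"
        using core[OF assms(2) sig cn H] by blast
      define M where "M = max 0 (Max ((\<lambda>v. c / phi v + 1) ` V))"
      have "worst_lat V phi k \<pi> t \<le> c" if t: "M < t" for t
      proof (rule wl_le)
        fix v assume v: "v \<in> V"
        have "c / phi v + 1 \<le> Max ((\<lambda>v. c / phi v + 1) ` V)" using v finV by (intro Max_ge) auto
        then have "c / phi v + 1 < t" "0 \<le> t" using t unfolding M_def by auto
        then obtain s i where si: "i < k" "0 \<le> s" "t - c / phi v \<le> s" "s \<le> t" "\<pi> s i = Vtx v"
          using vis[OF _ v] by blast
        have "latency k \<pi> v t \<le> c / phi v" by (rule lat_visit[of i k s t "c / phi v" \<pi> v, OF si])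
        then show "phi v * latency k \<pi> v t \<le> c" using phipos[OF v] by (simp add: field_simps mult.commute)
      qed
      then have "eventually (\<lambda>t. ereal (worst_lat V phi k \<pi> t) \<le> ereal c) at_top"
        by (auto simp: eventually_at_top_dense)
      then have "cost V phi k T \<pi> \<le> ereal c" using True by (simp add: cost_def Limsup_bounded)
      moreover have "?I \<le> cost V phi k T \<pi>" by (rule INF_lower[OF pis])
      ultimately show ?thesis using pis c by (intro bexI[of _ \<pi>]) auto
    qed
  qed
qed


end
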